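(* Let $F$ be a Banach lattice. The set of weakly dispersed closed subspaces of $F$ is open in the gap topology, and so is the set of strongly dispersed closed subspaces. Moreover, for a closed subspace $E$ of $F$ the following are equivalent: (i) $E$ is weakly (resp. strongly) dispersed; (ii) the un-topology (resp. una-topology) coincides with the norm topology on $E$; (iii) the semi-norm $\rho_E$ and the un-topology (resp. una-topology) are complementary on $F$, i.e. there is no net in $\mathrm{S}_F$ which is null both in the un-topology (resp. una-topology) and with respect to $\rho_E$.
   Context: $\mathrm{S}_X$ denotes the unit sphere of a normed space $X$. $\rho_E(f)$ is the distance from $f$ to $E$. The un-topology on $F$ is the linear topology with a base of zero neighborhoods $\{f\in F:\||f|\wedge h\|<\varepsilon\}$, $h\in F_+$, $\varepsilon>0$. $F^a$ is the (closed) ideal of order continuous elements of $F$, and the una-topology is defined like the un-topology but with $h\in F^a_+$ only. A subspace $E$ is weakly (resp. strongly) dispersed if some un- (resp. una-) neighborhood of $0_F$ is disjoint from $\mathrm{S}_E$. The gap topology on closed subspaces of $F$ is given by the metric $d_2(G,H)$ equal to the Hausdorff distance between $\mathrm{S}_G$ and $\mathrm{S}_H$. *)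

theory Defs
  imports "HOL-Analysis.Analysis"
begin

class banach_lattice = banach + ordered_real_vector + lattice +
  assumes norm_lattice_mono: "sup x (- x) \<le> sup y (- y) \<Longrightarrow> norm x \<le> norm y"

definition labs :: "'a::banach_lattice \<Rightarrow> 'a" where
  "labs x = sup x (- x)"

definition unitS :: "'a::real_normed_vector set \<Rightarrow> 'a set" where
  "unitS E = {x \<in> E. norm x = 1}"

definition closed_subspace :: "'a::real_normed_vector set \<Rightarrow> bool" where
  "closed_subspace E \<longleftrightarrow> subspace E \<and> closed E"

text \<open>Order continuous elements (the ideal F^a): every downward directed set
(= decreasing net) contained in [0,|x|] with infimum 0 has infimum of norms 0.\<close>
definition order_continuous :: "'a::banach_lattice \<Rightarrow> bool" where
  "order_continuous x \<longleftrightarrow>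
     (\<forall>D. D \<noteq> {} \<and> D \<subseteq> {y. 0 \<le> y \<and> y \<le> labs x}
          \<and> (\<forall>a\<in>D. \<forall>b\<in>D. \<exists>c\<in>D. c \<le> a \<and> c \<le> b)
          \<and> (\<forall>z. (\<forall>d\<in>D. z \<le> d) \<longrightarrow> z \<le> 0)
        \<longrightarrow> (\<forall>\<epsilon>>0. \<exists>d\<in>D. norm d < \<epsilon>))"

definition un_topology_on :: "'a::banach_lattice set \<Rightarrow> 'a topology" where
  "un_topology_on H = topology (\<lambda>U. \<forall>x\<in>U. \<exists>h\<in>H. \<exists>\<epsilon>>0.
       {y. norm (inf (labs (y - x)) h) < \<epsilon>} \<subseteq> U)"

definition un_topology :: "'a::banach_lattice topology" where
  "un_topology = un_topology_on {h. 0 \<le> h}"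

definition una_topology :: "'a::banach_lattice topology" where
  "una_topology = un_topology_on {h. 0 \<le> h \<and> order_continuous h}"

definition weakly_dispersed :: "'a::banach_lattice set \<Rightarrow> bool" where
  "weakly_dispersed E \<longleftrightarrow> (\<exists>U. openin un_topology U \<and> 0 \<in> U \<and> U \<inter> unitS E = {})"

definition strongly_dispersed :: "'a::banach_lattice set \<Rightarrow> bool" where
  "strongly_dispersed E \<longleftrightarrow> (\<exists>U. openin una_topology U \<and> 0 \<in> U \<and> U \<inter> unitS E = {})"

text \<open>Nets are rendered as maps
x :: 'a \<Rightarrow> 'a along a proper filter on 'a (every net gives such a pair via its
image filter).\<close>
definition complementary :: "'a::banach_lattice topology \<Rightarrow> 'a set \<Rightarrow> bool" where
  "complementary T E \<longleftrightarrow>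
     \<not> (\<exists>(x::'a \<Rightarrow> 'a) (F::'a filter). F \<noteq> bot
          \<and> eventually (\<lambda>i. x i \<in> unitS UNIV) F
          \<and> limitin T x 0 F
          \<and> ((\<lambda>i. infdist (x i) E) \<longlongrightarrow> 0) F)"

text \<open>Hausdorff distance (values in [0,\<infinity>]; sup over empty set is 0,
inf over empty set is \<infinity>) and the gap metric d2.\<close>
definition hausdorff_dist :: "'a::metric_space set \<Rightarrow> 'a set \<Rightarrow> ennreal" where
  "hausdorff_dist A B = max (SUP x\<in>A. INF y\<in>B. ennreal (dist x y))
                             (SUP y\<in>B. INF x\<in>A. ennreal (dist x y))"

definition gap_dist :: "'a::real_normed_vector set \<Rightarrow> 'a set \<Rightarrow> ennreal" where
  "gap_dist G H = hausdorff_dist (unitS G) (unitS H)"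

definition gap_topology :: "'a::real_normed_vector set topology" where
  "gap_topology = topology (\<lambda>W. W \<subseteq> Collect closed_subspace \<and>
      (\<forall>G\<in>W. \<exists>\<delta>>0. \<forall>H. closed_subspace H \<and> gap_dist G H < ennreal \<delta> \<longrightarrow> H \<in> W))"

end

theory Submission imports Defs "HOL-Library.Lattice_Algebras" begin

context banach_lattice begin
subclass lattice_ab_group_add ..
end

lemma labs_pos: "0 \<le> (a::'a::banach_lattice) \<Longrightarrow> labs a = a"
proof -
  assume a: "0 \<le> a"
  have "- a \<le> 0" using a by (simp only: neg_le_0_iff_le)
  then have "- a \<le> a" using a by (rule order_trans)
  then show ?thesis unfolding labs_def by (rule sup_absorb1)
qed

lemma labs_nonneg: "0 \<le> labs (x::'a::banach_lattice)"
proof -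
  have "x + - x \<le> labs x + labs x" unfolding labs_def by (intro add_mono) auto
  then show ?thesis by simp
qed

lemma labs_labs: "labs (labs (x::'a::banach_lattice)) = labs x"
  using labs_pos labs_nonneg by blast

lemma norm_mono_pos: "0 \<le> (a::'a::banach_lattice) \<Longrightarrow> a \<le> b \<Longrightarrow> norm a \<le> norm b"
proof -
  assume a: "0 \<le> a" and ab: "a \<le> b"
  have b: "0 \<le> b" using a ab by (rule order_trans)
  have "labs a \<le> labs b" using labs_pos[OF a] labs_pos[OF b] ab by simp
  then show ?thesis using norm_lattice_mono[of a b] unfolding labs_def by blast
qed

lemma norm_labs: "norm (labs (x::'a::banach_lattice)) = norm x"
proof -
  have "labs (labs x) = labs x" by (rule labs_labs)
  then have 1: "sup (labs x) (- labs x) \<le> sup x (- x)" and 2: "sup x (- x) \<le> sup (labs x) (- labs x)"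
    unfolding labs_def[of "labs x"] unfolding labs_def by simp_all
  show ?thesis using norm_lattice_mono[OF 1] norm_lattice_mono[OF 2] by simp
qed

lemma labs_triangle: "labs ((x::'a::banach_lattice) + y) \<le> labs x + labs y"
  unfolding labs_def
proof (rule sup_least)
  show "x + y \<le> sup x (-x) + sup y (-y)" by (intro add_mono sup_ge1)
  have "-x + -y \<le> sup x (-x) + sup y (-y)" by (intro add_mono sup_ge2)
  then show "-(x + y) \<le> sup x (-x) + sup y (-y)" by (simp only: minus_add_distrib)
qed

lemma labs_minus: "labs (- (x::'a::banach_lattice)) = labs x"
  unfolding labs_def by (simp add: sup_commute)

lemma labs_diff_commute: "labs ((x::'a::banach_lattice) - y) = labs (y - x)"
  using labs_minus[of "x - y"] by simp

lemma labs_zero[simp]: "labs (0::'a::banach_lattice) = 0"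
  unfolding labs_def by simp

lemma inf_add_le:
  fixes a b c :: "'a::banach_lattice"
  assumes "0 \<le> a" "0 \<le> b" "0 \<le> c"
  shows "inf (a + b) c \<le> inf a c + inf b c"
proof -
  have "inf a c + inf b c = inf (inf (a + b) (c + b)) (inf (a + c) (c + c))"
    by (simp add: add_inf_distrib_left add_inf_distrib_right)
  moreover have "inf (a+b) c \<le> a + c"
    using inf_le2[of "a+b" c] add_increasing[OF assms(1) order_refl[of c]] by (rule order_trans)
  moreover have "inf (a+b) c \<le> c + b"
    using inf_le2[of "a+b" c] add_increasing2[OF assms(2) order_refl[of c]] by (rule order_trans)
  moreover have "inf (a+b) c \<le> c + c"
    using inf_le2[of "a+b" c] add_increasing2[OF assms(3) order_refl[of c]] by (rule order_trans)
  ultimately have "inf (a+b) c \<le> inf (inf (a + b) (c + b)) (inf (a + c) (c + c))"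
    by (intro le_infI inf_le1)
  with \<open>inf a c + inf b c = _\<close> show ?thesis by (simp only:)
qed

lemma scaleR_inf: "0 < (c::real) \<Longrightarrow> c *\<^sub>R inf (a::'a::banach_lattice) b = inf (c *\<^sub>R a) (c *\<^sub>R b)"
proof -
  assume c: "0 < c"
  then have c0: "0 \<le> c" by simp
  have ic: "0 \<le> inverse c" using c by simp
  have 1: "c *\<^sub>R inf a b \<le> inf (c *\<^sub>R a) (c *\<^sub>R b)"
  proof (rule inf_greatest)
    show "c *\<^sub>R inf a b \<le> c *\<^sub>R a" by (rule scaleR_left_mono[OF inf_le1 c0])
    show "c *\<^sub>R inf a b \<le> c *\<^sub>R b" by (rule scaleR_left_mono[OF inf_le2 c0])
  qed
  have ca: "inverse c *\<^sub>R (c *\<^sub>R a) = a" and cb: "inverse c *\<^sub>R (c *\<^sub>R b) = b"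
    using c by simp_all
  have "inverse c *\<^sub>R inf (c *\<^sub>R a) (c *\<^sub>R b) \<le> inf a b"
  proof (rule inf_greatest)
    show "inverse c *\<^sub>R inf (c *\<^sub>R a) (c *\<^sub>R b) \<le> a"
      using scaleR_left_mono[OF inf_le1 ic, of "c *\<^sub>R a" "c *\<^sub>R b"] ca by (simp only:)
    show "inverse c *\<^sub>R inf (c *\<^sub>R a) (c *\<^sub>R b) \<le> b"
      using scaleR_left_mono[OF inf_le2 ic, of "c *\<^sub>R a" "c *\<^sub>R b"] cb by (simp only:)
  qed
  then have "c *\<^sub>R (inverse c *\<^sub>R inf (c *\<^sub>R a) (c *\<^sub>R b)) \<le> c *\<^sub>R inf a b"
    by (rule scaleR_left_mono[OF _ c0])
  moreover have "c *\<^sub>R (inverse c *\<^sub>R inf (c *\<^sub>R a) (c *\<^sub>R b)) = inf (c *\<^sub>R a) (c *\<^sub>R b)"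
    using c by simp
  ultimately have "inf (c *\<^sub>R a) (c *\<^sub>R b) \<le> c *\<^sub>R inf a b" by simp
  with 1 show ?thesis by (rule antisym)
qed

lemma scaleR_sup: "0 < (c::real) \<Longrightarrow> c *\<^sub>R sup (a::'a::banach_lattice) b = sup (c *\<^sub>R a) (c *\<^sub>R b)"
proof -
  assume c: "0 < c"
  have "c *\<^sub>R sup a b = c *\<^sub>R (- inf (- a) (- b))" by (simp only: sup_eq_neg_inf[of a b])
  also have "\<dots> = - (c *\<^sub>R inf (- a) (- b))" by (rule scaleR_minus_right)
  also have "\<dots> = - inf (c *\<^sub>R (- a)) (c *\<^sub>R (- b))" by (simp only: scaleR_inf[OF c])
  also have "\<dots> = - inf (- (c *\<^sub>R a)) (- (c *\<^sub>R b))" by (simp only: scaleR_minus_right)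
  also have "\<dots> = sup (c *\<^sub>R a) (c *\<^sub>R b)" by (simp only: sup_eq_neg_inf[of "c *\<^sub>R a" "c *\<^sub>R b"])
  finally show ?thesis .
qed

lemma labs_scaleR: "0 < (c::real) \<Longrightarrow> labs (c *\<^sub>R (x::'a::banach_lattice)) = c *\<^sub>R labs x"
  unfolding labs_def by (simp only: scaleR_sup scaleR_minus_right)

definition nb :: "'a::banach_lattice \<Rightarrow> 'a \<Rightarrow> real" where
  "nb h f = norm (inf (labs f) h)"

lemma nb_le_norm: "0 \<le> h \<Longrightarrow> nb h f \<le> norm (f::'a::banach_lattice)"
  unfolding nb_def using norm_mono_pos[of "inf (labs f) h" "labs f"] norm_labs[of f] labs_nonneg[of f]
  by auto

lemma nb_mono: "0 \<le> h \<Longrightarrow> labs f \<le> labs g \<Longrightarrow> h \<le> k \<Longrightarrow> nb h f \<le> nb k (g::'a::banach_lattice)"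
  unfolding nb_def using labs_nonneg[of f]
  by (intro norm_mono_pos inf_mono) auto

lemma nb_triangle: "0 \<le> h \<Longrightarrow> nb h (f + g) \<le> nb h f + nb h (g::'a::banach_lattice)"
proof -
  assume h: "0 \<le> h"
  have "inf (labs (f+g)) h \<le> inf (labs f + labs g) h" by (intro inf_mono labs_triangle) auto
  also have "\<dots> \<le> inf (labs f) h + inf (labs g) h" using h labs_nonneg by (intro inf_add_le) auto
  finally have "norm (inf (labs (f+g)) h) \<le> norm (inf (labs f) h + inf (labs g) h)"
    using h labs_nonneg by (intro norm_mono_pos) auto
  also have "\<dots> \<le> norm (inf (labs f) h) + norm (inf (labs g) h)" by (rule norm_triangle_ineq)
  finally show ?thesis unfolding nb_def .
qed

lemma nb_zero[simp]: "0 \<le> h \<Longrightarrow> nb h (0::'a::banach_lattice) = 0"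
  unfolding nb_def by (simp add: inf_absorb1)


definition goodH :: "'a::banach_lattice set \<Rightarrow> bool" where
  "goodH H \<longleftrightarrow> (\<forall>h\<in>H. 0 \<le> h) \<and> (\<forall>h\<in>H. \<forall>k\<in>H. h + k \<in> H) \<and> H \<noteq> {}"

definition disp :: "'a::banach_lattice set \<Rightarrow> 'a set \<Rightarrow> bool" where
  "disp H E \<longleftrightarrow> (\<exists>U. openin (un_topology_on H) U \<and> 0 \<in> U \<and> U \<inter> unitS E = {})"

lemma goodH_pos: "goodH H \<Longrightarrow> h \<in> H \<Longrightarrow> 0 \<le> h"
  unfolding goodH_def by blast

lemma goodH_add: "goodH H \<Longrightarrow> h \<in> H \<Longrightarrow> k \<in> H \<Longrightarrow> h + k \<in> H"
  unfolding goodH_def by blast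

lemma goodH_ne: "goodH H \<Longrightarrow> \<exists>h. h \<in> H"
  unfolding goodH_def by blast

lemma un_pred_eq: "(\<lambda>U. \<forall>x\<in>U. \<exists>h\<in>H. \<exists>\<epsilon>>0. {y. norm (inf (labs (y - x)) h) < \<epsilon>} \<subseteq> U)
   = (\<lambda>U. \<forall>x\<in>U. \<exists>h\<in>H. \<exists>\<epsilon>>0. \<forall>y. nb h (y - x) < \<epsilon> \<longrightarrow> y \<in> U)"
  unfolding nb_def by (auto simp: subset_eq)

lemma istop_un:
  assumes "goodH H"
  shows "istopology (\<lambda>U. \<forall>x\<in>U. \<exists>h\<in>H. \<exists>\<epsilon>>0. \<forall>y. nb h (y - x) < \<epsilon> \<longrightarrow> y \<in> U)"
  unfolding istopology_def
proof (intro conjI allI impI)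
  fix S T :: "'a set"
  assume S: "\<forall>x\<in>S. \<exists>h\<in>H. \<exists>\<epsilon>>0. \<forall>y. nb h (y - x) < \<epsilon> \<longrightarrow> y \<in> S"
    and T: "\<forall>x\<in>T. \<exists>h\<in>H. \<exists>\<epsilon>>0. \<forall>y. nb h (y - x) < \<epsilon> \<longrightarrow> y \<in> T"
  show "\<forall>x\<in>S \<inter> T. \<exists>h\<in>H. \<exists>\<epsilon>>0. \<forall>y. nb h (y - x) < \<epsilon> \<longrightarrow> y \<in> S \<inter> T"
  proof
    fix x assume x: "x \<in> S \<inter> T"
    obtain h1 e1 where h1: "h1 \<in> H" "e1 > 0" "\<forall>y. nb h1 (y - x) < e1 \<longrightarrow> y \<in> S"
      using S x by blast
    obtain h2 e2 where h2: "h2 \<in> H" "e2 > 0" "\<forall>y. nb h2 (y - x) < e2 \<longrightarrow> y \<in> T"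
      using T x by blast
    have p1: "0 \<le> h1" and p2: "0 \<le> h2" and s: "h1 + h2 \<in> H"
      using goodH_pos[OF assms h1(1)] goodH_pos[OF assms h2(1)] goodH_add[OF assms h1(1) h2(1)] by auto
    have le1: "h1 \<le> h1 + h2" using p2 by (simp add: add_increasing2)
    have le2: "h2 \<le> h1 + h2" using p1 by (simp add: add_increasing)
    show "\<exists>h\<in>H. \<exists>\<epsilon>>0. \<forall>y. nb h (y - x) < \<epsilon> \<longrightarrow> y \<in> S \<inter> T"
    proof (intro bexI[OF _ s] exI[of _ "min e1 e2"] conjI allI impI)
      show "min e1 e2 > 0" using h1 h2 by simp
      fix y assume y: "nb (h1 + h2) (y - x) < min e1 e2"
      have "nb h1 (y - x) \<le> nb (h1 + h2) (y - x)" using nb_mono[OF p1 order_refl le1] .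
      moreover have "nb h2 (y - x) \<le> nb (h1 + h2) (y - x)" using nb_mono[OF p2 order_refl le2] .
      ultimately have "nb h1 (y - x) < e1" "nb h2 (y - x) < e2" using y by auto
      then show "y \<in> S \<inter> T" using h1(3) h2(3) by blast
    qed
  qed
next
  fix K :: "'a set set"
  assume K: "\<forall>U\<in>K. \<forall>x\<in>U. \<exists>h\<in>H. \<exists>\<epsilon>>0. \<forall>y. nb h (y - x) < \<epsilon> \<longrightarrow> y \<in> U"
  show "\<forall>x\<in>\<Union>K. \<exists>h\<in>H. \<exists>\<epsilon>>0. \<forall>y. nb h (y - x) < \<epsilon> \<longrightarrow> y \<in> \<Union>K"
  proof
    fix x assume "x \<in> \<Union>K"
    then obtain U where U: "U \<in> K" "x \<in> U" by blast
    then obtain h e where h: "h \<in> H" "e > 0" "\<forall>y. nb h (y - x) < e \<longrightarrow> y \<in> U"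
      using K by meson
    show "\<exists>h\<in>H. \<exists>\<epsilon>>0. \<forall>y. nb h (y - x) < \<epsilon> \<longrightarrow> y \<in> \<Union>K"
      using h U by blast
  qed
qed

lemma openin_un:
  assumes "goodH H"
  shows "openin (un_topology_on H) U \<longleftrightarrow> (\<forall>x\<in>U. \<exists>h\<in>H. \<exists>\<epsilon>>0. \<forall>y. nb h (y - x) < \<epsilon> \<longrightarrow> y \<in> U)"
  unfolding un_topology_on_def un_pred_eq using topology_inverse'[OF istop_un[OF assms]] by simp

lemma open_nbset:
  assumes "goodH H" "h \<in> H"
  shows "openin (un_topology_on H) {y. nb h (y - x) < \<epsilon>}"
  unfolding openin_un[OF assms(1)]
proof
  fix z assume "z \<in> {y. nb h (y - x) < \<epsilon>}"
  then have z: "nb h (z - x) < \<epsilon>" by simp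
  have h0: "0 \<le> h" using goodH_pos[OF assms] .
  show "\<exists>k\<in>H. \<exists>\<epsilon>'>0. \<forall>y. nb k (y - z) < \<epsilon>' \<longrightarrow> y \<in> {y. nb h (y - x) < \<epsilon>}"
  proof (intro bexI[OF _ assms(2)] exI[of _ "\<epsilon> - nb h (z - x)"] conjI allI impI)
    show "\<epsilon> - nb h (z - x) > 0" using z by simp
    fix y assume y: "nb h (y - z) < \<epsilon> - nb h (z - x)"
    have "nb h (y - x) \<le> nb h (y - z) + nb h (z - x)"
      using nb_triangle[OF h0, of "y - z" "z - x"] by simp
    then show "y \<in> {y. nb h (y - x) < \<epsilon>}" using y by simp
  qed
qed

lemma topspace_un:
  assumes "goodH H"
  shows "topspace (un_topology_on H) = UNIV"
proof -
  obtain h where "h \<in> H" using goodH_ne[OF assms] by blast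
  then have "openin (un_topology_on H) UNIV"
    unfolding openin_un[OF assms] by (intro ballI bexI[of _ h] exI[of _ 1]) auto
  then show ?thesis by (meson openin_subset top.extremum_uniqueI)
qed

lemma un_open_imp_open:
  assumes "goodH H" "openin (un_topology_on H) U"
  shows "open U"
  unfolding open_dist
proof
  fix x assume x: "x \<in> U"
  then obtain h e where h: "h \<in> H" "e > 0" "\<forall>y. nb h (y - x) < e \<longrightarrow> y \<in> U"
    using assms unfolding openin_un[OF assms(1)] by blast
  have h0: "0 \<le> h" using goodH_pos[OF assms(1) h(1)] .
  show "\<exists>e>0. \<forall>y. dist y x < e \<longrightarrow> y \<in> U"
  proof (intro exI[of _ e] conjI allI impI)
    fix y assume "dist y x < e"
    then have "nb h (y - x) < e" using nb_le_norm[OF h0, of "y - x"] by (simp add: dist_norm)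
    then show "y \<in> U" using h by blast
  qed (use h in auto)
qed

lemma disp_iff:
  assumes "goodH H"
  shows "disp H E \<longleftrightarrow> (\<exists>h\<in>H. \<exists>\<epsilon>>0. \<forall>s\<in>unitS E. \<epsilon> \<le> nb h s)"
proof
  assume "disp H E"
  then obtain U where U: "openin (un_topology_on H) U" "0 \<in> U" "U \<inter> unitS E = {}"
    unfolding disp_def by blast
  then obtain h e where h: "h \<in> H" "e > 0" "\<forall>y. nb h (y - 0) < e \<longrightarrow> y \<in> U"
    unfolding openin_un[OF assms] by blast
  show "\<exists>h\<in>H. \<exists>\<epsilon>>0. \<forall>s\<in>unitS E. \<epsilon> \<le> nb h s"
  proof (intro bexI[OF _ h(1)] exI[of _ e] conjI ballI)
    fix s assume "s \<in> unitS E"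
    then have "s \<notin> U" using U by blast
    then show "e \<le> nb h s" using h(3) by force
  qed (use h in auto)
next
  assume "\<exists>h\<in>H. \<exists>\<epsilon>>0. \<forall>s\<in>unitS E. \<epsilon> \<le> nb h s"
  then obtain h e where h: "h \<in> H" "e > 0" "\<forall>s\<in>unitS E. e \<le> nb h s" by blast
  have h0: "0 \<le> h" using goodH_pos[OF assms(1) h(1)] .
  show "disp H E"
    unfolding disp_def
  proof (intro exI[of _ "{y. nb h (y - 0) < e}"] conjI)
    show "openin (un_topology_on H) {y. nb h (y - 0) < e}" by (rule open_nbset[OF assms h(1)])
    show "0 \<in> {y. nb h (y - 0) < e}" using h h0 by simp
    show "{y. nb h (y - 0) < e} \<inter> unitS E = {}" using h(3) by force
  qed
qed


lemma keyK:
  fixes E :: "'a::banach_lattice set"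
  assumes E: "subspace E" and h0: "0 \<le> h"
    and bnd: "\<forall>s\<in>unitS E. \<epsilon> \<le> nb h s"
    and f: "f \<in> E" and r: "0 < r" "r \<le> 1" and small: "nb h f < r * \<epsilon>"
  shows "norm f < r"
proof (rule ccontr)
  assume "\<not> norm f < r"
  then have nf: "r \<le> norm f" by simp
  define n where "n = norm f"
  have n0: "0 < n" using nf r(1) unfolding n_def by linarith
  define g where "g = inverse n *\<^sub>R f"
  have gE: "g \<in> E" unfolding g_def using E f by (rule subspace_scale)
  have gn: "norm g = 1" unfolding g_def n_def using n0 n_def by simp
  then have gS: "g \<in> unitS E" using gE unfolding unitS_def by simp
  have lg: "labs g = inverse n *\<^sub>R labs f" unfolding g_def using n0 by (simp add: labs_scaleR)
  have inr: "inverse n \<le> inverse r" using nf r unfolding n_def by (simp add: le_imp_inverse_le)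
  have "1 \<le> inverse r" using r by (simp add: one_le_inverse)
  then have hle: "h \<le> inverse r *\<^sub>R h" using scaleR_right_mono[OF _ h0, of 1 "inverse r"] by simp
  have lf0: "0 \<le> labs f" by (rule labs_nonneg)
  have "inverse n *\<^sub>R labs f \<le> inverse r *\<^sub>R labs f" by (rule scaleR_right_mono[OF inr lf0])
  then have "inf (labs g) h \<le> inf (inverse r *\<^sub>R labs f) (inverse r *\<^sub>R h)"
    unfolding lg using hle by (rule inf_mono)
  also have "\<dots> = inverse r *\<^sub>R inf (labs f) h" using r by (simp add: scaleR_inf)
  finally have le: "inf (labs g) h \<le> inverse r *\<^sub>R inf (labs f) h" .
  have "0 \<le> inf (labs g) h" using labs_nonneg h0 by (rule le_infI)
  then have "nb h g \<le> norm (inverse r *\<^sub>R inf (labs f) h)"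
    unfolding nb_def using le by (rule norm_mono_pos)
  also have "\<dots> = inverse r * nb h f" using r unfolding nb_def by simp
  also have "\<dots> < inverse r * (r * \<epsilon>)" using small r by simp
  also have "\<dots> = \<epsilon>" using r by simp
  finally have "nb h g < \<epsilon>" .
  with bnd gS show False by fastforce
qed

lemma disp_subtop:
  fixes E :: "'a::banach_lattice set"
  assumes H: "goodH H" and E: "subspace E" and d: "disp H E"
  shows "subtopology (un_topology_on H) E = top_of_set E"
proof -
  obtain h e where h: "h \<in> H" "e > 0" "\<forall>s\<in>unitS E. e \<le> nb h s"
    using d unfolding disp_iff[OF H] by blast
  have h0: "0 \<le> h" using goodH_pos[OF H h(1)] .
  show ?thesis
    unfolding topology_eq
  proof (intro allI iffI)
    fix S assume "openin (subtopology (un_topology_on H) E) S"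
    then obtain U where U: "openin (un_topology_on H) U" "S = U \<inter> E"
      unfolding openin_subtopology by blast
    have "open U" by (rule un_open_imp_open[OF H U(1)])
    then show "openin (top_of_set E) S" using U(2) by (simp add: Int_commute openin_open_Int)
  next
    fix S assume S: "openin (top_of_set E) S"
    then have SE: "S \<subseteq> E" and So: "\<forall>x\<in>S. \<exists>e>0. \<forall>x'\<in>E. dist x' x < e \<longrightarrow> x'\<in> S"
      unfolding openin_euclidean_subtopology_iff by blast+
    define U where "U = {y. \<exists>x\<in>S. \<exists>r. 0 < r \<and> r \<le> 1 \<and> (\<forall>z\<in>E. dist z x < r \<longrightarrow> z \<in> S)
                               \<and> nb h (y - x) < r * e}"
    have Uo: "openin (un_topology_on H) U"
      unfolding openin_un[OF H]
    proof
      fix y assume "y \<in> U"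
      then obtain x r where xr: "x \<in> S" "0 < r" "r \<le> 1" "\<forall>z\<in>E. dist z x < r \<longrightarrow> z \<in> S"
          "nb h (y - x) < r * e" unfolding U_def by blast
      show "\<exists>h\<in>H. \<exists>\<epsilon>>0. \<forall>z. nb h (z - y) < \<epsilon> \<longrightarrow> z \<in> U"
      proof (intro bexI[OF _ h(1)] exI[of _ "r * e - nb h (y - x)"] conjI allI impI)
        show "r * e - nb h (y - x) > 0" using xr by simp
        fix z assume z: "nb h (z - y) < r * e - nb h (y - x)"
        have "nb h (z - x) \<le> nb h (z - y) + nb h (y - x)"
          using nb_triangle[OF h0, of "z - y" "y - x"] by simp
        then have "nb h (z - x) < r * e" using z by simp
        then show "z \<in> U" unfolding U_def using xr by blast
      qed
    qed
    have "S = U \<inter> E"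
    proof
      show "S \<subseteq> U \<inter> E"
      proof
        fix x assume x: "x \<in> S"
        then obtain r0 where r0: "r0 > 0" "\<forall>x'\<in>E. dist x' x < r0 \<longrightarrow> x'\<in> S" using So by blast
        have "x \<in> U" unfolding U_def
          using x r0 h0 h(2) by (intro CollectI bexI[OF _ x] exI[of _ "min r0 1"]) auto
        then show "x \<in> U \<inter> E" using x SE by blast
      qed
      show "U \<inter> E \<subseteq> S"
      proof
        fix y assume y: "y \<in> U \<inter> E"
        then obtain x r where xr: "x \<in> S" "0 < r" "r \<le> 1" "\<forall>z\<in>E. dist z x < r \<longrightarrow> z \<in> S"
          "nb h (y - x) < r * e" unfolding U_def by blast
        have "y - x \<in> E" using E y xr(1) SE by (blast intro: subspace_diff)
        then have "norm (y - x) < r" using keyK[OF E h0 h(3) _ xr(2) xr(3) xr(5)] by blast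
        then show "y \<in> S" using xr(4) y by (simp add: dist_norm)
      qed
    qed
    then show "openin (subtopology (un_topology_on H) E) S"
      unfolding openin_subtopology using Uo by blast
  qed
qed

lemma subtop_disp:
  fixes E :: "'a::banach_lattice set"
  assumes H: "goodH H" and E: "subspace E" and eq: "subtopology (un_topology_on H) E = top_of_set E"
  shows "disp H E"
proof -
  have "openin (top_of_set E) (E \<inter> ball 0 1)" by (rule openin_open_Int) simp
  then have "openin (subtopology (un_topology_on H) E) (E \<inter> ball 0 1)" using eq by simp
  then obtain U where U: "openin (un_topology_on H) U" "E \<inter> ball 0 1 = U \<inter> E"
    unfolding openin_subtopology by blast
  have "0 \<in> E" using E by (rule subspace_0)
  then have "0 \<in> U" using U(2) by auto
  moreover have "U \<inter> unitS E = {}"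
  proof (rule ccontr)
    assume "U \<inter> unitS E \<noteq> {}"
    then obtain s where "s \<in> U" "s \<in> E" "norm s = 1" unfolding unitS_def by blast
    then have "s \<in> ball 0 1" using U(2) by blast
    then show False using \<open>norm s = 1\<close> by simp
  qed
  ultimately show ?thesis unfolding disp_def using U(1) by blast
qed


lemma disp_compl:
  fixes E :: "'a::banach_lattice set"
  assumes H: "goodH H" and E: "subspace E" and d: "disp H E"
  shows "complementary (un_topology_on H) E"
  unfolding complementary_def
proof
  assume "\<exists>(x::'a \<Rightarrow> 'a) F. F \<noteq> bot \<and> eventually (\<lambda>i. x i \<in> unitS UNIV) F
          \<and> limitin (un_topology_on H) x 0 F \<and> ((\<lambda>i. infdist (x i) E) \<longlongrightarrow> 0) F"
  then obtain x :: "'a \<Rightarrow> 'a" and F where F: "F \<noteq> bot" "eventually (\<lambda>i. x i \<in> unitS UNIV) F"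
     "limitin (un_topology_on H) x 0 F" "((\<lambda>i. infdist (x i) E) \<longlongrightarrow> 0) F" by blast
  obtain h e where h: "h \<in> H" "e > 0" "\<forall>s\<in>unitS E. e \<le> nb h s"
    using d unfolding disp_iff[OF H] by blast
  have h0: "0 \<le> h" using goodH_pos[OF H h(1)] .
  define \<delta> where "\<delta> = min (e/4) (1/4)"
  have d0: "\<delta> > 0" unfolding \<delta>_def using h by simp
  have o1: "openin (un_topology_on H) {y. nb h (y - 0) < \<delta>}" by (rule open_nbset[OF H h(1)])
  have o2: "0 \<in> {y. nb h (y - 0) < \<delta>}" using d0 h0 by simp
  have ev1: "eventually (\<lambda>i. x i \<in> {y. nb h (y - 0) < \<delta>}) F"
    by (rule limitinD[OF F(3) o1 o2])
  have ev2: "eventually (\<lambda>i. infdist (x i) E < \<delta>) F"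
    using order_tendstoD(2)[OF F(4) d0] .
  have E0: "E \<noteq> {}" using subspace_0[OF E] by blast
  have "eventually (\<lambda>i. False) F"
    using F(2) ev1 ev2
  proof eventually_elim
    case (elim i)
    then have n1: "norm (x i) = 1" and nbx: "nb h (x i) < \<delta>" and inf: "infdist (x i) E < \<delta>"
      unfolding unitS_def by auto
    have "(INF a\<in>E. dist (x i) a) < \<delta>" using inf unfolding infdist_notempty[OF E0] .
    then obtain a where a: "a \<in> E" "dist (x i) a < \<delta>"
      using cINF_less_iff[OF E0 bdd_below_image_dist] by blast
    have "nb h a \<le> nb h (x i) + nb h (a - x i)"
      using nb_triangle[OF h0, of "x i" "a - x i"] by simp
    also have "\<dots> \<le> nb h (x i) + norm (a - x i)" using nb_le_norm[OF h0, of "a - x i"] by simp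
    also have "\<dots> < \<delta> + \<delta>" using nbx a(2) by (simp add: dist_norm norm_minus_commute)
    also have "\<dots> \<le> (1/2) * e" unfolding \<delta>_def by simp
    finally have "nb h a < (1/2) * e" .
    then have "norm a < 1/2" using keyK[OF E h0 h(3) a(1), of "1/2"] by simp
    moreover have "norm (x i) \<le> norm a + norm (x i - a)" using norm_triangle_ineq[of a "x i - a"] by simp
    moreover have "norm (x i - a) < 1/4" using a(2) unfolding \<delta>_def by (simp add: dist_norm)
    ultimately show False using n1 by simp
  qed
  then show False using F(1) by (simp add: eventually_False)
qed

lemma compl_disp:
  fixes E :: "'a::banach_lattice set"
  assumes H: "goodH H" and E: "subspace E" and c: "complementary (un_topology_on H) E"
  shows "disp H E"
proof (rule ccontr)
  assume nd: "\<not> disp H E"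
  define F where "F = inf (nhdsin (un_topology_on H) 0) (principal (unitS E))"
  have top: "topspace (un_topology_on H) = UNIV" by (rule topspace_un[OF H])
  have "F \<noteq> bot"
  proof
    assume "F = bot"
    then have "eventually (\<lambda>y. False) F" by simp
    then have "eventually (\<lambda>y. y \<in> unitS E \<longrightarrow> False) (nhdsin (un_topology_on H) 0)"
      unfolding F_def eventually_inf_principal .
    then obtain S where S: "openin (un_topology_on H) S" "0 \<in> S" "\<forall>y\<in>S. y \<notin> unitS E"
      unfolding eventually_nhdsin top by blast
    then have "disp H E" unfolding disp_def by blast
    with nd show False by blast
  qed
  moreover have "eventually (\<lambda>i. id i \<in> unitS UNIV) F"
    unfolding F_def eventually_inf_principal by (rule always_eventually) (auto simp: unitS_def)
  moreover have "limitin (un_topology_on H) id 0 F"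
    unfolding limitin_def
  proof (intro conjI allI impI)
    show "0 \<in> topspace (un_topology_on H)" using top by simp
    fix U assume U: "openin (un_topology_on H) U \<and> 0 \<in> U"
    have "eventually (\<lambda>y. y \<in> U) (nhdsin (un_topology_on H) 0)"
      unfolding eventually_nhdsin using U by blast
    then show "eventually (\<lambda>y. id y \<in> U) F"
      unfolding F_def eventually_inf_principal by (rule eventually_mono) simp
  qed
  moreover have "((\<lambda>i. infdist (id i) E) \<longlongrightarrow> 0) F"
  proof (rule tendsto_eventually)
    show "eventually (\<lambda>i. infdist (id i) E = 0) F"
      unfolding F_def eventually_inf_principal
      by (rule always_eventually) (auto simp: unitS_def)
  qed
  ultimately show False using c unfolding complementary_def by blast
qed

lemma gap_pred_istop:
  "istopology (\<lambda>W. W \<subseteq> Collect closed_subspace \<and>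
      (\<forall>G\<in>W. \<exists>\<delta>>0. \<forall>H. closed_subspace H \<and> gap_dist G H < ennreal \<delta> \<longrightarrow> H \<in> W))"
  unfolding istopology_def
proof (rule conjI; intro allI impI)
  fix S T :: "'a set set"
  assume S: "S \<subseteq> Collect closed_subspace \<and> (\<forall>G\<in>S. \<exists>\<delta>>0. \<forall>H. closed_subspace H \<and> gap_dist G H < ennreal \<delta> \<longrightarrow> H \<in> S)"
    and T: "T \<subseteq> Collect closed_subspace \<and> (\<forall>G\<in>T. \<exists>\<delta>>0. \<forall>H. closed_subspace H \<and> gap_dist G H < ennreal \<delta> \<longrightarrow> H \<in> T)"
  show "S \<inter> T \<subseteq> Collect closed_subspace \<and> (\<forall>G\<in>S \<inter> T. \<exists>\<delta>>0. \<forall>H. closed_subspace H \<and> gap_dist G H < ennreal \<delta> \<longrightarrow> H \<in> S \<inter> T)"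
  proof (intro conjI ballI)
    show "S \<inter> T \<subseteq> Collect closed_subspace" using S by blast
    fix G assume G: "G \<in> S \<inter> T"
    obtain d1 where d1: "d1 > 0" "\<forall>H. closed_subspace H \<and> gap_dist G H < ennreal d1 \<longrightarrow> H \<in> S"
      using S G by blast
    obtain d2 where d2: "d2 > 0" "\<forall>H. closed_subspace H \<and> gap_dist G H < ennreal d2 \<longrightarrow> H \<in> T"
      using T G by blast
    show "\<exists>\<delta>>0. \<forall>H. closed_subspace H \<and> gap_dist G H < ennreal \<delta> \<longrightarrow> H \<in> S \<inter> T"
    proof (intro exI[of _ "min d1 d2"] conjI allI impI)
      show "min d1 d2 > 0" using d1 d2 by simp
      fix H assume H: "closed_subspace H \<and> gap_dist G H < ennreal (min d1 d2)"
      have "ennreal (min d1 d2) \<le> ennreal d1" "ennreal (min d1 d2) \<le> ennreal d2"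
        by (simp_all add: ennreal_leI)
      then have "gap_dist G H < ennreal d1" "gap_dist G H < ennreal d2" using H by auto
      then show "H \<in> S \<inter> T" using d1 d2 H by blast
    qed
  qed
next
  fix K :: "'a set set set"
  assume K: "\<forall>W\<in>K. W \<subseteq> Collect closed_subspace \<and> (\<forall>G\<in>W. \<exists>\<delta>>0. \<forall>H. closed_subspace H \<and> gap_dist G H < ennreal \<delta> \<longrightarrow> H \<in> W)"
  show "\<Union>K \<subseteq> Collect closed_subspace \<and> (\<forall>G\<in>\<Union>K. \<exists>\<delta>>0. \<forall>H. closed_subspace H \<and> gap_dist G H < ennreal \<delta> \<longrightarrow> H \<in> \<Union>K)"
  proof (intro conjI ballI)
    show "\<Union>K \<subseteq> Collect closed_subspace" using K by blast
    fix G assume "G \<in> \<Union>K"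
    then obtain W where W: "W \<in> K" "G \<in> W" by blast
    then obtain d where d: "d > 0" "\<forall>H. closed_subspace H \<and> gap_dist G H < ennreal d \<longrightarrow> H \<in> W"
      using K by meson
    show "\<exists>\<delta>>0. \<forall>H. closed_subspace H \<and> gap_dist G H < ennreal \<delta> \<longrightarrow> H \<in> \<Union>K"
      using d W by blast
  qed
qed

lemma openin_gap:
  "openin gap_topology W \<longleftrightarrow> W \<subseteq> Collect closed_subspace \<and>
      (\<forall>G\<in>W. \<exists>\<delta>>0. \<forall>H. closed_subspace H \<and> gap_dist G H < ennreal \<delta> \<longrightarrow> H \<in> W)"
  by (simp only: gap_topology_def topology_inverse'[OF gap_pred_istop])

lemma gap_close:
  assumes "gap_dist G H' < ennreal \<delta>" "s \<in> unitS H'"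
  shows "\<exists>g\<in>unitS G. dist g s < \<delta>"
proof -
  have "(INF x\<in>unitS G. ennreal (dist x s)) \<le> (SUP y\<in>unitS H'. INF x\<in>unitS G. ennreal (dist x y))"
    using assms(2) by (rule SUP_upper)
  also have "\<dots> \<le> gap_dist G H'" unfolding gap_dist_def hausdorff_dist_def by simp
  finally have "(INF x\<in>unitS G. ennreal (dist x s)) < ennreal \<delta>" using assms(1) by simp
  then obtain g where g: "g \<in> unitS G" "ennreal (dist g s) < ennreal \<delta>"
    unfolding INF_less_iff by blast
  then have "dist g s < \<delta>" by (simp add: ennreal_less_iff)
  then show ?thesis using g by blast
qed

lemma gap_open_disp:
  fixes dummy :: "'a::banach_lattice"
  assumes H: "goodH (H :: 'a set)"
  shows "openin gap_topology {E. closed_subspace E \<and> disp H E}"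
  unfolding openin_gap
proof (intro conjI ballI)
  show "{E. closed_subspace E \<and> disp H E} \<subseteq> Collect closed_subspace" by blast
  fix G assume "G \<in> {E. closed_subspace E \<and> disp H E}"
  then have "disp H G" by blast
  then obtain h e where h: "h \<in> H" "e > 0" "\<forall>s\<in>unitS G. e \<le> nb h s"
    unfolding disp_iff[OF H] by blast
  have h0: "0 \<le> h" using goodH_pos[OF H h(1)] .
  show "\<exists>\<delta>>0. \<forall>H'. closed_subspace H' \<and> gap_dist G H' < ennreal \<delta> \<longrightarrow> H' \<in> {E. closed_subspace E \<and> disp H E}"
  proof (intro exI[of _ "e/2"] conjI allI impI)
    show "e / 2 > 0" using h by simp
    fix H' assume H': "closed_subspace H' \<and> gap_dist G H' < ennreal (e/2)"
    have "\<forall>s\<in>unitS H'. e/2 \<le> nb h s"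
    proof
      fix s assume s: "s \<in> unitS H'"
      show "e/2 \<le> nb h s"
      proof (rule ccontr)
        assume "\<not> e/2 \<le> nb h s"
        then have ns: "nb h s < e/2" by simp
        obtain g where g: "g \<in> unitS G" "dist g s < e/2" using gap_close[OF conjunct2[OF H'] s] by blast
        have "nb h g \<le> nb h s + nb h (g - s)" using nb_triangle[OF h0, of s "g - s"] by simp
        also have "\<dots> \<le> nb h s + norm (g - s)" using nb_le_norm[OF h0, of "g - s"] by simp
        also have "\<dots> < e" using ns g(2) by (simp add: dist_norm)
        finally have "nb h g < e" .
        then show False using h(3) g(1) by fastforce
      qed
    qed
    then have "disp H H'" unfolding disp_iff[OF H] using h(1) h(2) by (intro bexI[OF _ h(1)] exI[of _ "e/2"]) auto
    then show "H' \<in> {E. closed_subspace E \<and> disp H E}" using H' by blast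
  qed
qed


lemma oc_reduce:
  fixes h :: "'a::banach_lattice"
  assumes oc: "order_continuous h" and h0: "0 \<le> h"
    and D: "D \<noteq> {}" "D \<subseteq> {y. 0 \<le> y}" "\<forall>a\<in>D. \<forall>b\<in>D. \<exists>c\<in>D. c \<le> a \<and> c \<le> b"
       "\<forall>z. (\<forall>d\<in>D. z \<le> d) \<longrightarrow> z \<le> 0"
    and e: "e > 0"
  shows "\<exists>d\<in>D. norm (inf d h) < e"
proof -
  define D1 where "D1 = (\<lambda>d. inf d h) ` D"
  have "D1 \<noteq> {}" unfolding D1_def using D(1) by blast
  moreover have "D1 \<subseteq> {y. 0 \<le> y \<and> y \<le> labs h}"
  proof
    fix y assume "y \<in> D1"
    then obtain d where d: "d \<in> D" "y = inf d h" unfolding D1_def by blast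
    have "0 \<le> d" using d D(2) by blast
    then have "0 \<le> y" using h0 d(2) by simp
    moreover have "y \<le> labs h" using d(2) labs_pos[OF h0] by simp
    ultimately show "y \<in> {y. 0 \<le> y \<and> y \<le> labs h}" by blast
  qed
  moreover have "\<forall>a\<in>D1. \<forall>b\<in>D1. \<exists>c\<in>D1. c \<le> a \<and> c \<le> b"
  proof (intro ballI)
    fix a b assume "a \<in> D1" "b \<in> D1"
    then obtain a' b' where ab: "a' \<in> D" "b' \<in> D" "a = inf a' h" "b = inf b' h" unfolding D1_def by blast
    then obtain c where c: "c \<in> D" "c \<le> a'" "c \<le> b'" using D(3) by blast
    have "inf c h \<in> D1" unfolding D1_def using c(1) by blast
    moreover have "inf c h \<le> a" using inf_mono[OF c(2) order_refl[of h]] ab(3) by simp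
    moreover have "inf c h \<le> b" using inf_mono[OF c(3) order_refl[of h]] ab(4) by simp
    ultimately show "\<exists>c\<in>D1. c \<le> a \<and> c \<le> b" by blast
  qed
  moreover have "\<forall>z. (\<forall>d\<in>D1. z \<le> d) \<longrightarrow> z \<le> 0"
  proof (intro allI impI)
    fix z assume z: "\<forall>d\<in>D1. z \<le> d"
    have "\<forall>d\<in>D. z \<le> d"
    proof
      fix d assume "d \<in> D"
      then have "z \<le> inf d h" using z unfolding D1_def by blast
      then show "z \<le> d" by simp
    qed
    then show "z \<le> 0" using D(4) by blast
  qed
  ultimately have "\<exists>d\<in>D1. norm d < e" using oc e unfolding order_continuous_def by blast
  then show ?thesis unfolding D1_def by blast
qed

lemma oc_zero: "order_continuous (0::'a::banach_lattice)"
  unfolding order_continuous_def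
proof (intro allI impI)
  fix D :: "'a set" and e :: real
  assume D: "D \<noteq> {} \<and> D \<subseteq> {y. 0 \<le> y \<and> y \<le> labs 0} \<and> (\<forall>a\<in>D. \<forall>b\<in>D. \<exists>c\<in>D. c \<le> a \<and> c \<le> b)
          \<and> (\<forall>z. (\<forall>d\<in>D. z \<le> d) \<longrightarrow> z \<le> 0)" and e: "0 < e"
  from D have "D \<noteq> {}" by (rule conjunct1)
  then obtain d where d: "d \<in> D" by auto
  then have "d = 0" using D by (auto intro: antisym)
  then show "\<exists>d\<in>D. norm d < e" using e by (intro bexI[OF _ d]) simp
qed

lemma oc_add:
  fixes h1 h2 :: "'a::banach_lattice"
  assumes o1: "order_continuous h1" and p1: "0 \<le> h1" and o2: "order_continuous h2" and p2: "0 \<le> h2"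
  shows "order_continuous (h1 + h2)"
  unfolding order_continuous_def
proof (intro allI impI)
  fix D :: "'a set" and e :: real
  assume D: "D \<noteq> {} \<and> D \<subseteq> {y. 0 \<le> y \<and> y \<le> labs (h1 + h2)} \<and> (\<forall>a\<in>D. \<forall>b\<in>D. \<exists>c\<in>D. c \<le> a \<and> c \<le> b)
          \<and> (\<forall>z. (\<forall>d\<in>D. z \<le> d) \<longrightarrow> z \<le> 0)" and e: "0 < e"
  have p: "0 \<le> h1 + h2" using p1 p2 by simp
  have D': "D \<noteq> {}" "D \<subseteq> {y. 0 \<le> y}" "\<forall>a\<in>D. \<forall>b\<in>D. \<exists>c\<in>D. c \<le> a \<and> c \<le> b"
       "\<forall>z. (\<forall>d\<in>D. z \<le> d) \<longrightarrow> z \<le> 0" using D by blast+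
  have e2: "e/2 > 0" using e by simp
  obtain d1 where d1: "d1 \<in> D" "norm (inf d1 h1) < e/2" using oc_reduce[OF o1 p1 D' e2] by blast
  obtain d2 where d2: "d2 \<in> D" "norm (inf d2 h2) < e/2" using oc_reduce[OF o2 p2 D' e2] by blast
  obtain c where c: "c \<in> D" "c \<le> d1" "c \<le> d2" using D'(3) d1 d2 by blast
  have c0: "0 \<le> c" using c D by blast
  have ch: "c \<le> h1 + h2" using c D labs_pos[OF p] by auto
  have "c = inf (h1 + h2) c" using ch by (simp add: inf_absorb2)
  also have "\<dots> \<le> inf h1 c + inf h2 c" by (rule inf_add_le[OF p1 p2 c0])
  finally have "norm c \<le> norm (inf h1 c + inf h2 c)" by (rule norm_mono_pos[OF c0])
  also have "\<dots> \<le> norm (inf h1 c) + norm (inf h2 c)" by (rule norm_triangle_ineq)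
  also have "norm (inf h1 c) \<le> norm (inf d1 h1)"
    using inf_mono[OF c(2) order_refl[of h1]] p1 c0 by (intro norm_mono_pos) (simp_all add: inf_commute)
  also have "norm (inf h2 c) \<le> norm (inf d2 h2)"
    using inf_mono[OF c(3) order_refl[of h2]] p2 c0 by (intro norm_mono_pos) (simp_all add: inf_commute)
  finally have "norm c < e" using d1 d2 by simp
  then show "\<exists>d\<in>D. norm d < e" using c by blast
qed

lemma good1: "goodH {h::'a::banach_lattice. 0 \<le> h}"
  unfolding goodH_def by (auto intro: add_nonneg_nonneg)

lemma good2: "goodH {h::'a::banach_lattice. 0 \<le> h \<and> order_continuous h}"
  unfolding goodH_def using oc_zero by (auto intro: add_nonneg_nonneg oc_add)

lemma wd_eq: "weakly_dispersed = disp {h::'a::banach_lattice. 0 \<le> h}"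
  by (rule ext) (simp add: weakly_dispersed_def disp_def un_topology_def)

lemma sd_eq: "strongly_dispersed = disp {h::'a::banach_lattice. 0 \<le> h \<and> order_continuous h}"
  by (rule ext) (simp add: strongly_dispersed_def disp_def una_topology_def)

theorem proposition4p1:
  shows "openin (gap_topology :: 'a::banach_lattice set topology)
           {E. closed_subspace E \<and> weakly_dispersed E} \<and>
         openin (gap_topology :: 'a::banach_lattice set topology)
           {E. closed_subspace E \<and> strongly_dispersed E} \<and>
         (\<forall>E::'a::banach_lattice set. closed_subspace E \<longrightarrow>
           ((weakly_dispersed E \<longleftrightarrow> subtopology un_topology E = top_of_set E) \<and>
            (weakly_dispersed E \<longleftrightarrow> complementary un_topology E))) \<and>
         (\<forall>E::'a::banach_lattice set. closed_subspace E \<longrightarrow>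
           ((strongly_dispersed E \<longleftrightarrow> subtopology una_topology E = top_of_set E) \<and>
            (strongly_dispersed E \<longleftrightarrow> complementary una_topology E)))"
proof (intro conjI allI impI)
  show "openin (gap_topology :: 'a::banach_lattice set topology)
           {E. closed_subspace E \<and> weakly_dispersed E}"
    unfolding wd_eq by (rule gap_open_disp[OF good1])
  show "openin (gap_topology :: 'a::banach_lattice set topology)
           {E. closed_subspace E \<and> strongly_dispersed E}"
    unfolding sd_eq by (rule gap_open_disp[OF good2])
next
  fix E :: "'a set" assume "closed_subspace E"
  then have E: "subspace E" unfolding closed_subspace_def by blast
  show "weakly_dispersed E \<longleftrightarrow> subtopology un_topology E = top_of_set E"
    unfolding wd_eq un_topology_def using disp_subtop[OF good1 E] subtop_disp[OF good1 E] by blast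
  show "weakly_dispersed E \<longleftrightarrow> complementary un_topology E"
    unfolding wd_eq un_topology_def using disp_compl[OF good1 E] compl_disp[OF good1 E] by blast
next
  fix E :: "'a set" assume "closed_subspace E"
  then have E: "subspace E" unfolding closed_subspace_def by blast
  show "strongly_dispersed E \<longleftrightarrow> subtopology una_topology E = top_of_set E"
    unfolding sd_eq una_topology_def using disp_subtop[OF good2 E] subtop_disp[OF good2 E] by blast
  show "strongly_dispersed E \<longleftrightarrow> complementary una_topology E"
    unfolding sd_eq una_topology_def using disp_compl[OF good2 E] compl_disp[OF good2 E] by blast
qed

end
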